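(* Let $(X,\|\cdot\|_X)$ be a Banach space and $\mathcal{K}\subset X$ compact. (i) If for some constants $c_1>0$, $\alpha>0$, $\beta\in\mathbb{R}$ we have $\varepsilon_n(\mathcal{K})_X>c_1\frac{(\log_2n)^\beta}{n^\alpha}$ for all $n\ge2$, then for each $\gamma>0$ there exists $C>0$ such that $d_n^\gamma(\mathcal{K})_X\ge C\frac{(\log_2n)^{\beta-\alpha}}{n^\alpha}$ for all $n\ge2$. (ii) If for some constants $c_1>0$, $\alpha>0$ we have $\varepsilon_n(\mathcal{K})_X>c_1(\log_2n)^{-\alpha}$ for all $n\ge2$, then for each $\gamma>0$ there exists $C>0$ such that $d_n^\gamma(\mathcal{K})_X\ge C(\log_2n)^{-\alpha}$ for all $n\ge2$. (iii) If for some constants $c_1,c>0$ and $0<\alpha<1$ we have $\varepsilon_n(\mathcal{K})_X>c_12^{-cn^\alpha}$ for $n=1,2,\dots$, then for each $\gamma\ge2\,\mathrm{rad}(\mathcal{K})$ there exist constants $C,c_2>0$ such that $d_n^\gamma(\mathcal{K})_X\ge C2^{-c_2n^{\alpha/(1-\alpha)}}$ for $n=1,2,\dots$.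
   Context: $\mathrm{rad}(\mathcal{K})=\inf_{g\in X}\sup_{f\in\mathcal{K}}\|f-g\|_X$. For $m\ge0$, the entropy number $\varepsilon_m(\mathcal{K})_X$ is the infimum of all $\varepsilon>0$ such that $\mathcal{K}$ is covered by $2^m$ closed balls of radius $\varepsilon$ with centers in $X$. For $k\ge1$ and a norm $\|\cdot\|_{Y_k}$ on $\mathbb{R}^k$ let $B_{Y_k}=\{y\in\mathbb{R}^k:\|y\|_{Y_k}\le1\}$. For $\gamma\ge0$, the fixed Lipschitz width is $d^\gamma(\mathcal{K},Y_k)_X=\inf_{\Phi}\sup_{f\in\mathcal{K}}\inf_{y\in B_{Y_k}}\|f-\Phi(y)\|_X$, the infimum over all maps $\Phi:B_{Y_k}\to X$ with $\|\Phi(y)-\Phi(y')\|_X\le\gamma\|y-y'\|_{Y_k}$ for all $y,y'\in B_{Y_k}$. The Lipschitz width is $d_n^\gamma(\mathcal{K})_X=\inf_{1\le k\le n}\inf_{\|\cdot\|_{Y_k}}d^\gamma(\mathcal{K},Y_k)_X$, the inner infimum over all norms on $\mathbb{R}^k$. *)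

theory Defs
  imports "HOL-Analysis.Analysis"
begin

definition rad :: "'a::real_normed_vector set \<Rightarrow> real" where
  "rad K = Inf (range (\<lambda>g. SUP f\<in>K. norm (f - g)))"

definition entropy_number :: "nat \<Rightarrow> 'a::real_normed_vector set \<Rightarrow> real" where
  "entropy_number m K = Inf {eps. eps > 0 \<and>
     (\<exists>C. finite C \<and> card C \<le> 2 ^ m \<and> K \<subseteq> (\<Union>c\<in>C. cball c eps))}"

text \<open>R^k is represented as functions nat => real vanishing at indices i >= k.\<close>
definition Rk :: "nat \<Rightarrow> (nat \<Rightarrow> real) set" where
  "Rk k = {y. \<forall>i\<ge>k. y i = 0}"

definition is_norm_on :: "nat \<Rightarrow> ((nat \<Rightarrow> real) \<Rightarrow> real) \<Rightarrow> bool" where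
  "is_norm_on k N \<longleftrightarrow>
     (\<forall>x\<in>Rk k. N x \<ge> 0 \<and> (N x = 0 \<longleftrightarrow> x = (\<lambda>i. 0))) \<and>
     (\<forall>x\<in>Rk k. \<forall>a. N (\<lambda>i. a * x i) = \<bar>a\<bar> * N x) \<and>
     (\<forall>x\<in>Rk k. \<forall>y\<in>Rk k. N (\<lambda>i. x i + y i) \<le> N x + N y)"

definition unit_ball :: "nat \<Rightarrow> ((nat \<Rightarrow> real) \<Rightarrow> real) \<Rightarrow> (nat \<Rightarrow> real) set" where
  "unit_ball k N = {y \<in> Rk k. N y \<le> 1}"

definition lipschitz_on_ball ::
  "real \<Rightarrow> nat \<Rightarrow> ((nat \<Rightarrow> real) \<Rightarrow> real) \<Rightarrow> ((nat \<Rightarrow> real) \<Rightarrow> 'a::real_normed_vector) \<Rightarrow> bool" where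
  "lipschitz_on_ball \<gamma> k N \<Phi> \<longleftrightarrow>
     (\<forall>y\<in>unit_ball k N. \<forall>y'\<in>unit_ball k N. norm (\<Phi> y - \<Phi> y') \<le> \<gamma> * N (\<lambda>i. y i - y' i))"

definition fixed_lip_width ::
  "real \<Rightarrow> 'a::real_normed_vector set \<Rightarrow> nat \<Rightarrow> ((nat \<Rightarrow> real) \<Rightarrow> real) \<Rightarrow> real" where
  "fixed_lip_width \<gamma> K k N = Inf ((\<lambda>\<Phi>. SUP f\<in>K. INF y\<in>unit_ball k N. norm (f - \<Phi> y))
       ` {\<Phi>. lipschitz_on_ball \<gamma> k N \<Phi>})"

definition lip_width :: "nat \<Rightarrow> real \<Rightarrow> 'a::real_normed_vector set \<Rightarrow> real" where
  "lip_width n \<gamma> K = Inf {fixed_lip_width \<gamma> K k N | k N. 1 \<le> k \<and> k \<le> n \<and> is_norm_on k N}"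

end

theory Submission
  imports Defs "Jordan_Normal_Form.Determinant"
begin


lemma Rk_zero[simp]: "(\<lambda>i. 0) \<in> Rk k" by (simp add: Rk_def)
lemma Rk_add[intro]: "x \<in> Rk k \<Longrightarrow> y \<in> Rk k \<Longrightarrow> (\<lambda>i. x i + y i) \<in> Rk k" by (simp add: Rk_def)
lemma Rk_diff[intro]: "x \<in> Rk k \<Longrightarrow> y \<in> Rk k \<Longrightarrow> (\<lambda>i. x i - y i) \<in> Rk k" by (simp add: Rk_def)
lemma Rk_scale[intro]: "x \<in> Rk k \<Longrightarrow> (\<lambda>i. a * x i) \<in> Rk k" by (simp add: Rk_def)
lemma Rk_sum[intro]: "(\<And>j. j \<in> J \<Longrightarrow> v j \<in> Rk k) \<Longrightarrow> (\<lambda>i. \<Sum>j\<in>J. c j * v j i) \<in> Rk k"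
  by (simp add: Rk_def)
lemma Rk_neg[intro]: "x \<in> Rk k \<Longrightarrow> (\<lambda>i. - x i) \<in> Rk k" by (simp add: Rk_def)
lemma Rk_mono: "k \<le> k' \<Longrightarrow> x \<in> Rk k \<Longrightarrow> x \<in> Rk k'" by (simp add: Rk_def)
lemma Rk_unit[intro]: "j < k \<Longrightarrow> (\<lambda>i. if i = j then a else 0) \<in> Rk k" by (simp add: Rk_def)

locale knorm =
  fixes k :: nat and N :: "(nat \<Rightarrow> real) \<Rightarrow> real"
  assumes isn: "is_norm_on k N"
begin

lemma nonneg: "x \<in> Rk k \<Longrightarrow> N x \<ge> 0" using isn by (simp add: is_norm_on_def)
lemma zero_iff: "x \<in> Rk k \<Longrightarrow> N x = 0 \<longleftrightarrow> x = (\<lambda>i. 0)" using isn by (simp add: is_norm_on_def)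
lemma scale: "x \<in> Rk k \<Longrightarrow> N (\<lambda>i. a * x i) = \<bar>a\<bar> * N x" using isn by (simp add: is_norm_on_def)
lemma tri: "x \<in> Rk k \<Longrightarrow> y \<in> Rk k \<Longrightarrow> N (\<lambda>i. x i + y i) \<le> N x + N y"
  using isn by (simp add: is_norm_on_def)
lemma zero[simp]: "N (\<lambda>i. 0) = 0" using zero_iff[of "\<lambda>i. 0"] by simp
lemma neg: "x \<in> Rk k \<Longrightarrow> N (\<lambda>i. - x i) = N x" using scale[of x "-1"] by simp
lemma commute: "x \<in> Rk k \<Longrightarrow> y \<in> Rk k \<Longrightarrow> N (\<lambda>i. x i - y i) = N (\<lambda>i. y i - x i)"
  using neg[of "\<lambda>i. y i - x i"] by (auto simp: Rk_def)
lemma tri_diff: "x \<in> Rk k \<Longrightarrow> y \<in> Rk k \<Longrightarrow> z \<in> Rk k \<Longrightarrow> N (\<lambda>i. x i - z i) \<le> N (\<lambda>i. x i - y i) + N (\<lambda>i. y i - z i)"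
  using tri[of "\<lambda>i. x i - y i" "\<lambda>i. y i - z i"] by auto
lemma tri_sub: "x \<in> Rk k \<Longrightarrow> y \<in> Rk k \<Longrightarrow> N (\<lambda>i. x i - y i) \<le> N x + N y"
  using tri[of x "\<lambda>i. - y i"] neg[of y] by auto

lemma sum_bound: "finite J \<Longrightarrow> (\<And>j. j \<in> J \<Longrightarrow> v j \<in> Rk k) \<Longrightarrow>
   N (\<lambda>i. \<Sum>j\<in>J. c j * v j i) \<le> (\<Sum>j\<in>J. \<bar>c j\<bar> * N (v j))"
proof (induction J rule: finite_induct)
  case empty
  then show ?case by simp
next
  case (insert a J)
  have "N (\<lambda>i. \<Sum>j\<in>insert a J. c j * v j i) = N (\<lambda>i. c a * v a i + (\<Sum>j\<in>J. c j * v j i))"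
    using insert by simp
  also have "\<dots> \<le> N (\<lambda>i. c a * v a i) + N (\<lambda>i. (\<Sum>j\<in>J. c j * v j i))"
    using insert by (intro tri) auto
  also have "\<dots> \<le> \<bar>c a\<bar> * N (v a) + (\<Sum>j\<in>J. \<bar>c j\<bar> * N (v j))"
    using insert scale[of "v a" "c a"] by auto
  finally show ?case using insert by simp
qed

lemma restrict: "k' \<le> k \<Longrightarrow> is_norm_on k' N"
  using isn Rk_mono[of k' k] unfolding is_norm_on_def by blast

end

lemma l1_norm: "is_norm_on k (\<lambda>x. \<Sum>i<k. \<bar>x i\<bar>)"
proof -
  have "x = (\<lambda>i. 0)" if "x \<in> Rk k" "(\<Sum>i<k. \<bar>x i\<bar>) = 0" for x
  proof
    fix i show "x i = 0"
    proof (cases "i < k")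
      case True then show ?thesis using that sum_nonneg_eq_0_iff[of "{..<k}" "\<lambda>i. \<bar>x i\<bar>"] by auto
    next
      case False then show ?thesis using that by (auto simp: Rk_def)
    qed
  qed
  moreover have "(\<Sum>i<k. \<bar>x i + y i\<bar>) \<le> (\<Sum>i<k. \<bar>x i\<bar>) + (\<Sum>i<k. \<bar>y i\<bar>)" for x y :: "nat \<Rightarrow> real"
    by (simp add: sum.distrib[symmetric] sum_mono abs_triangle_ineq)
  ultimately show ?thesis unfolding is_norm_on_def
    by (auto simp: abs_mult sum_distrib_left intro!: sum_nonneg)
qed



lemma convergent_from_bound:
  fixes X b :: "nat \<Rightarrow> real"
  assumes b: "b \<longlonglongrightarrow> 0" and X: "\<And>m l. \<bar>X m - X l\<bar> \<le> b m + b l"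
  shows "convergent X"
proof -
  have "Cauchy X"
  proof (rule CauchyI)
    fix e :: real assume e: "0 < e"
    then have "e/2 > 0" by simp
    from LIMSEQ_D[OF b this] obtain M where M: "\<And>n. n \<ge> M \<Longrightarrow> norm (b n - 0) < e/2" by blast
    show "\<exists>M. \<forall>m\<ge>M. \<forall>n\<ge>M. norm (X m - X n) < e"
    proof (intro exI allI impI)
      fix m n assume "m \<ge> M" "n \<ge> M"
      then have "\<bar>b m\<bar> < e/2" "\<bar>b n\<bar> < e/2" using M by auto
      then show "norm (X m - X n) < e" using X[of m n] by simp
    qed
  qed
  then show ?thesis by (simp add: Cauchy_convergent_iff)
qed

lemma norm_lower: "is_norm_on k N \<Longrightarrow> \<exists>a>0. \<forall>x\<in>Rk k. \<forall>i. a * \<bar>x i\<bar> \<le> N x"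
proof (induction k arbitrary: N)
  case 0
  then interpret knorm 0 N using 0 by (simp add: knorm_def)
  show ?case by (intro exI[of _ 1]) (auto simp: Rk_def nonneg)
next
  case (Suc j)
  interpret knorm "Suc j" N using Suc.prems by (simp add: knorm_def)
  obtain a' where a': "a' > 0" "\<And>x i. x \<in> Rk j \<Longrightarrow> a' * \<bar>x i\<bar> \<le> N x"
    using Suc.IH[OF restrict[of j]] by auto
  define e where "e = (\<lambda>i::nat. if i = j then (1::real) else 0)"
  have eR: "e \<in> Rk (Suc j)" unfolding e_def by auto
  have RjS: "y \<in> Rk j \<Longrightarrow> y \<in> Rk (Suc j)" for y using Rk_mono[of j "Suc j"] by auto
  define D where "D = (\<lambda>y. N (\<lambda>i. e i + y i)) ` Rk j"
  define d where "d = Inf D"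
  have Dne: "D \<noteq> {}" unfolding D_def by auto
  have Dbdd: "bdd_below D" unfolding D_def
    by (rule bdd_belowI[of _ 0]) (auto intro!: nonneg Rk_add[OF eR RjS])
  have dle: "d \<le> N (\<lambda>i. e i + y i)" if "y \<in> Rk j" for y
    unfolding d_def using that Dbdd by (auto simp: D_def intro!: cInf_lower)
  have dpos: "d > 0"
  proof (rule ccontr)
    assume "\<not> d > 0"
    then have "\<exists>y\<in>Rk j. N (\<lambda>i. e i + y i) < inverse (real (Suc m))" for m
    proof -
      assume "\<not> d > 0"
      then have "Inf D < inverse (real (Suc m))" unfolding d_def
        by (smt (verit) positive_imp_inverse_positive of_nat_0_less_iff zero_less_Suc)
      from cInf_lessD[OF Dne this] show ?thesis unfolding D_def by auto
    qed
    then obtain ys where ys: "\<And>m. ys m \<in> Rk j" "\<And>m. N (\<lambda>i. e i + ys m i) < inverse (real (Suc m))"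
      by metis
    define b where "b m = inverse (real (Suc m)) / a'" for m
    have b0: "b \<longlonglongrightarrow> 0" unfolding b_def
      by (intro tendsto_divide_zero LIMSEQ_inverse_real_of_nat)
    have conv: "convergent (\<lambda>m. ys m i)" for i
    proof (rule convergent_from_bound[OF b0])
      fix m l
      have "a' * \<bar>ys m i - ys l i\<bar> \<le> N (\<lambda>i. ys m i - ys l i)"
        using a'(2)[of "\<lambda>i. ys m i - ys l i" i] ys(1) by auto
      also have "\<dots> \<le> N (\<lambda>i. ys m i - (- e i)) + N (\<lambda>i. (- e i) - ys l i)"
        using ys(1) eR by (intro tri_diff) (auto simp: Rk_def)
      also have "\<dots> = N (\<lambda>i. e i + ys m i) + N (\<lambda>i. e i + ys l i)"
      proof -
        have "N (\<lambda>i. (- e i) - ys l i) = N (\<lambda>i. - (e i + ys l i))" by simp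
        also have "\<dots> = N (\<lambda>i. e i + ys l i)" using ys(1) eR by (intro neg) (auto simp: Rk_def)
        finally show ?thesis by (simp add: add.commute)
      qed
      also have "\<dots> \<le> a' * (b m + b l)" using ys(2)[of m] ys(2)[of l] a'(1)
        by (simp add: b_def algebra_simps)
      finally show "\<bar>ys m i - ys l i\<bar> \<le> b m + b l" using a'(1) by simp
    qed
    define z where "z i = (if i < j then lim (\<lambda>m. ys m i) else 0)" for i
    have zR: "z \<in> Rk j" by (auto simp: z_def Rk_def)
    have zlim: "(\<lambda>m. ys m i) \<longlonglongrightarrow> z i" if "i < j" for i
      using conv[of i] that by (simp add: z_def convergent_LIMSEQ_iff)
    define u where "u i = (\<lambda>l::nat. if l = i then (1::real) else 0)" for i
    have uR: "u i \<in> Rk (Suc j)" if "i < j" for i using that unfolding u_def by auto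
    have bound: "N (\<lambda>i. e i + z i) \<le> inverse (real (Suc m)) + (\<Sum>i<j. \<bar>z i - ys m i\<bar> * N (u i))" for m
    proof -
      have eq: "(\<lambda>l. z l - ys m l) = (\<lambda>l. \<Sum>i<j. (z i - ys m i) * u i l)"
      proof
        fix l show "z l - ys m l = (\<Sum>i<j. (z i - ys m i) * u i l)"
        proof (cases "l < j")
          case True then show ?thesis by (simp add: u_def if_distrib sum.delta cong: if_cong)
        next
          case False then show ?thesis using ys(1)[of m] zR by (auto simp: u_def Rk_def)
        qed
      qed
      have "N (\<lambda>i. e i + z i) = N (\<lambda>i. (e i + ys m i) + (z i - ys m i))" by simp
      also have "\<dots> \<le> N (\<lambda>i. e i + ys m i) + N (\<lambda>i. z i - ys m i)"
        using ys(1) eR zR by (intro tri) (auto simp: Rk_def)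
      also have "N (\<lambda>i. z i - ys m i) \<le> (\<Sum>i<j. \<bar>z i - ys m i\<bar> * N (u i))"
        unfolding eq by (rule sum_bound) (auto intro: uR)
      finally show ?thesis using ys(2)[of m] by simp
    qed
    have lim0: "(\<lambda>m. inverse (real (Suc m)) + (\<Sum>i<j. \<bar>z i - ys m i\<bar> * N (u i))) \<longlonglongrightarrow> 0 + (\<Sum>i<j. \<bar>z i - z i\<bar> * N (u i))"
      by (intro tendsto_add LIMSEQ_inverse_real_of_nat tendsto_sum tendsto_mult tendsto_rabs tendsto_diff tendsto_const zlim) auto
    have "N (\<lambda>i. e i + z i) \<le> 0"
      using lim0 bound by (intro tendsto_le[OF _ _ tendsto_const, of sequentially]) (auto simp del: of_nat_Suc intro: always_eventually)
    then have "N (\<lambda>i. e i + z i) = 0" using nonneg[of "\<lambda>i. e i + z i"] eR zR by (auto simp: Rk_def)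
    then have "(\<lambda>i. e i + z i) = (\<lambda>i. 0)" using zero_iff[of "\<lambda>i. e i + z i"] eR zR by (auto simp: Rk_def)
    then have "e j + z j = 0" by meson
    then show False by (simp add: e_def z_def)
  qed
  define a where "a = min d (a' / (1 + N e / d))"
  have Ne: "N e \<ge> 0" using nonneg eR by auto
  have apos: "a > 0" unfolding a_def using dpos a'(1) Ne by (simp add: add_pos_nonneg)
  show ?case
  proof (intro exI[of _ a] conjI apos ballI allI)
    fix x i assume x: "x \<in> Rk (Suc j)"
    define t where "t = x j"
    define y where "y = (\<lambda>i. if i = j then 0 else x i)"
    have yR: "y \<in> Rk j" using x by (auto simp: y_def Rk_def)
    have xeq: "x = (\<lambda>i. t * e i + y i)" by (auto simp: t_def e_def y_def)
    have Nx0: "N x \<ge> 0" using nonneg x by auto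
    have td: "\<bar>t\<bar> * d \<le> N x"
    proof (cases "t = 0")
      case True then show ?thesis using Nx0 by simp
    next
      case False
      have "x = (\<lambda>i. t * (e i + (inverse t * y i)))" unfolding xeq using False
        by (auto simp: algebra_simps)
      then have "N x = \<bar>t\<bar> * N (\<lambda>i. e i + inverse t * y i)"
        using scale[of "\<lambda>i. e i + inverse t * y i" t] eR yR by (auto simp: Rk_def)
      moreover have "d \<le> N (\<lambda>i. e i + inverse t * y i)" using dle yR by auto
      ultimately show ?thesis by (simp add: mult_left_mono)
    qed
    have Ny: "N y \<le> N x + \<bar>t\<bar> * N e"
    proof -
      have "y = (\<lambda>i. x i - t * e i)" by (auto simp: xeq)
      then have "N y \<le> N x + N (\<lambda>i. t * e i)" using tri_sub[of x "\<lambda>i. t * e i"] x eR by auto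
      then show ?thesis using scale[of e t] eR by simp
    qed
    have tle: "\<bar>t\<bar> \<le> N x / d" using td dpos by (simp add: field_simps)
    have "N y \<le> N x * (1 + N e / d)"
    proof -
      have "\<bar>t\<bar> * N e \<le> N x / d * N e" using tle Ne by (rule mult_right_mono)
      then show ?thesis using Ny by (simp add: algebra_simps)
    qed
    show "a * \<bar>x i\<bar> \<le> N x"
    proof (cases "i = j")
      case True
      have "a * \<bar>x i\<bar> \<le> d * \<bar>t\<bar>" using True unfolding t_def a_def by (simp add: mult_right_mono)
      then show ?thesis using td by (simp add: mult.commute)
    next
      case False
      have "a' * \<bar>x i\<bar> \<le> N y" using a'(2)[OF yR, of i] False by (simp add: y_def)
      also have "\<dots> \<le> N x * (1 + N e / d)" by fact
      finally have "a' / (1 + N e / d) * \<bar>x i\<bar> \<le> N x"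
        using dpos Ne by (simp add: field_simps add_pos_nonneg)
      moreover have "a * \<bar>x i\<bar> \<le> a' / (1 + N e / d) * \<bar>x i\<bar>" unfolding a_def by (intro mult_right_mono) auto
      ultimately show ?thesis by linarith
    qed
  qed
qed



definition Mv :: "nat \<Rightarrow> (nat \<Rightarrow> nat \<Rightarrow> real) \<Rightarrow> real Matrix.mat" where
  "Mv k v = Matrix.mat k k (\<lambda>(i,j). v j i)"

lemma Mv_carrier[simp]: "Mv k v \<in> carrier_mat k k" by (simp add: Mv_def)

lemma det_Mv_bound:
  assumes "\<And>j i. j < k \<Longrightarrow> \<bar>v j i\<bar> \<le> R"
  shows "\<bar>Determinant.det (Mv k v)\<bar> \<le> real (card {p. p permutes {0..<k}}) * R ^ k"
proof -
  have R0: "R \<ge> 0" if "k > 0" using assms[of 0 0] that by auto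
  have "\<bar>Determinant.det (Mv k v)\<bar> = \<bar>\<Sum>p\<in>{p. p permutes {0..<k}}. signof p * (\<Prod>i = 0..<k. Mv k v $$ (i, p i))\<bar>"
    by (subst det_def'[OF Mv_carrier]) (rule refl)
  also have "\<dots> \<le> (\<Sum>p\<in>{p. p permutes {0..<k}}. \<bar>signof p * (\<Prod>i = 0..<k. Mv k v $$ (i, p i))\<bar>)"
    by (rule sum_abs)
  also have "\<dots> \<le> (\<Sum>p\<in>{p. p permutes {0..<k}}. R ^ k)"
  proof (rule sum_mono)
    fix p assume p: "p \<in> {p. p permutes {0..<k}}"
    have "\<bar>signof p * (\<Prod>i = 0..<k. Mv k v $$ (i, p i))\<bar> = (\<Prod>i = 0..<k. \<bar>v (p i) i\<bar>)"
    proof -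
      have "p i < k" if "i < k" for i using p that permutes_in_image[of p "{0..<k}" i] by auto
      then have "(\<Prod>i = 0..<k. Mv k v $$ (i, p i)) = (\<Prod>i = 0..<k. v (p i) i)"
        by (intro prod.cong) (auto simp: Mv_def)
      then show ?thesis by (simp add: abs_mult sign_def abs_prod)
    qed
    also have "\<dots> \<le> (\<Prod>i = 0..<k. R)"
    proof (rule prod_mono)
      fix i assume "i \<in> {0..<k}"
      then show "0 \<le> \<bar>v (p i) i\<bar> \<and> \<bar>v (p i) i\<bar> \<le> R"
        using assms p permutes_in_image[of p "{0..<k}" i] by auto
    qed
    finally show "\<bar>signof p * (\<Prod>i = 0..<k. Mv k v $$ (i, p i))\<bar> \<le> R ^ k" by simp
  qed
  finally show ?thesis by simp
qed

lemma good_basis: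
  assumes isn: "is_norm_on k N"
  shows "\<exists>v coef. (\<forall>j<k. v j \<in> unit_ball k N) \<and>
     (\<forall>x\<in>Rk k. \<forall>i. x i = (\<Sum>j<k. coef x j * v j i)) \<and>
     (\<forall>x\<in>unit_ball k N. \<forall>j<k. \<bar>coef x j\<bar> \<le> 2)"
proof -
  interpret knorm k N using isn by (simp add: knorm_def)
  obtain a where a: "a > 0" "\<And>x i. x \<in> Rk k \<Longrightarrow> a * \<bar>x i\<bar> \<le> N x"
    using norm_lower[OF isn] by auto
  define B where "B = unit_ball k N"
  have Bbound: "\<bar>y i\<bar> \<le> 1 / a" if "y \<in> B" for y i
  proof -
    have "a * \<bar>y i\<bar> \<le> 1" using a(2)[of y i] that by (auto simp: B_def unit_ball_def)
    then show ?thesis using a(1) by (simp add: field_simps)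
  qed
  define Dset where "Dset = {\<bar>Determinant.det (Mv k v)\<bar> | v. \<forall>j<k. v j \<in> B}"
  define S where "S = Sup Dset"
  have bdd: "bdd_above Dset" unfolding Dset_def
    by (rule bdd_aboveI[of _ "real (card {p. p permutes {0..<k}}) * (1/a) ^ k"])
      (auto intro!: det_Mv_bound Bbound)
  have Sup_ge: "\<bar>Determinant.det (Mv k v)\<bar> \<le> S" if "\<forall>j<k. v j \<in> B" for v
    unfolding S_def using that bdd by (intro cSup_upper) (auto simp: Dset_def)
  define u where "u j = (\<lambda>i::nat. if i = j then (1::real) else 0)" for j
  have uR: "u j \<in> Rk k" if "j < k" for j using that unfolding u_def by auto
  define \<mu> where "\<mu> = (\<Sum>j<k. N (u j)) + 1"
  have Nu: "0 \<le> N (u j)" "N (u j) \<le> \<mu> - 1" if "j < k" for j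
  proof -
    show "0 \<le> N (u j)" using nonneg uR that by auto
    have "N (u j) \<le> (\<Sum>j<k. N (u j))"
      using that by (intro member_le_sum) (auto intro: nonneg uR)
    then show "N (u j) \<le> \<mu> - 1" by (simp add: \<mu>_def)
  qed
  have mupos: "\<mu> \<ge> 1" unfolding \<mu>_def by (auto intro!: sum_nonneg nonneg uR)
  define v0 where "v0 j = (\<lambda>i. (1/\<mu>) * u j i)" for j
  have v0B: "v0 j \<in> B" if "j < k" for j
  proof -
    have "N (v0 j) = (1/\<mu>) * N (u j)" unfolding v0_def using scale[OF uR[OF that], of "1/\<mu>"] mupos by simp
    also have "\<dots> \<le> 1" using Nu[OF that] mupos by (simp add: field_simps)
    finally show ?thesis unfolding B_def unit_ball_def v0_def using that by (auto simp: Rk_def u_def)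
  qed
  have "Mv k v0 = (1/\<mu>) \<cdot>\<^sub>m 1\<^sub>m k"
    by (rule eq_matI) (auto simp: Mv_def v0_def u_def)
  then have detv0: "Determinant.det (Mv k v0) = (1/\<mu>) ^ k" by simp
  have Spos: "S > 0"
  proof -
    have "(1/\<mu>) ^ k \<le> S" using Sup_ge[of v0] v0B detv0 by auto
    moreover have "(1/\<mu>) ^ k > 0" using mupos by simp
    ultimately show ?thesis by linarith
  qed
  have Dne: "Dset \<noteq> {}" unfolding Dset_def using v0B by auto
  have "S/2 < S" using Spos by simp
  then have "\<exists>x\<in>Dset. S/2 < x" unfolding S_def using less_cSup_iff[OF Dne bdd] by blast
  then obtain v where vB: "\<forall>j<k. v j \<in> B" and vdet: "S/2 < \<bar>Determinant.det (Mv k v)\<bar>"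
    by (auto simp: Dset_def)
  define M where "M = Mv k v"
  define \<delta> where "\<delta> = Determinant.det M"
  have dne: "\<delta> \<noteq> 0" using vdet Spos by (auto simp: \<delta>_def M_def)
  define Mi where "Mi = (1/\<delta>) \<cdot>\<^sub>m adj_mat M"
  have Mcar: "M \<in> carrier_mat k k" by (simp add: M_def)
  have Micar: "Mi \<in> carrier_mat k k" using adj_mat(1)[OF Mcar] by (simp add: Mi_def)
  have MMi: "M * Mi = 1\<^sub>m k"
  proof -
    have "M * Mi = (1/\<delta>) \<cdot>\<^sub>m (M * adj_mat M)"
      unfolding Mi_def by (rule mult_smult_distrib[OF Mcar adj_mat(1)[OF Mcar]])
    also have "\<dots> = (1/\<delta>) \<cdot>\<^sub>m (\<delta> \<cdot>\<^sub>m 1\<^sub>m k)" using adj_mat(2)[OF Mcar] by (simp add: \<delta>_def)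
    also have "\<dots> = 1\<^sub>m k" using dne by (intro eq_matI) auto
    finally show ?thesis .
  qed
  define coef where "coef x j = (Mi *\<^sub>v Matrix.vec k x) $ j" for x j
  have Mcoef: "M *\<^sub>v (Mi *\<^sub>v Matrix.vec k x) = Matrix.vec k x" for x
  proof -
    have "M *\<^sub>v (Mi *\<^sub>v Matrix.vec k x) = (M * Mi) *\<^sub>v Matrix.vec k x"
      by (rule assoc_mult_mat_vec[symmetric, OF Mcar Micar]) simp
    also have "\<dots> = Matrix.vec k x" unfolding MMi by simp
    finally show ?thesis .
  qed
  have vR: "v j \<in> Rk k" if "j < k" for j using vB that by (auto simp: B_def unit_ball_def)
  have repr: "x i = (\<Sum>j<k. coef x j * v j i)" if x: "x \<in> Rk k" for x i
  proof (cases "i < k")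
    case True
    have "x i = (Matrix.vec k x) $ i" using True by simp
    also have "\<dots> = (M *\<^sub>v (Mi *\<^sub>v Matrix.vec k x)) $ i" by (simp add: Mcoef)
    also have "\<dots> = (\<Sum>j = 0..<k. M $$ (i, j) * coef x j)"
      using True Mcar Micar by (simp add: scalar_prod_def coef_def)
    also have "\<dots> = (\<Sum>j<k. coef x j * v j i)"
      using True by (intro sum.cong) (auto simp: M_def Mv_def)
    finally show ?thesis .
  next
    case False
    then show ?thesis using x vR by (auto simp: Rk_def intro!: sum.neutral)
  qed
  have cb: "\<bar>coef x j\<bar> \<le> 2" if x: "x \<in> B" and j: "j < k" for x j
  proof -
    have xR: "x \<in> Rk k" using x by (auto simp: B_def unit_ball_def)
    have "replace_col M (M *\<^sub>v (Mi *\<^sub>v Matrix.vec k x)) j = Mv k (v(j := x))"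
      unfolding Mcoef by (rule eq_matI) (auto simp: replace_col_def M_def Mv_def)
    moreover have "Determinant.det (replace_col M (M *\<^sub>v (Mi *\<^sub>v Matrix.vec k x)) j) = coef x j * \<delta>"
      unfolding coef_def \<delta>_def using Micar by (intro cramer_lemma_mat[OF Mcar _ j]) simp
    ultimately have "\<bar>coef x j * \<delta>\<bar> \<le> S" using Sup_ge[of "v(j := x)"] vB x by auto
    then have "\<bar>coef x j\<bar> * \<bar>\<delta>\<bar> \<le> 2 * \<bar>\<delta>\<bar>" using vdet by (simp add: abs_mult \<delta>_def M_def)
    then show ?thesis using dne by simp
  qed
  show ?thesis
    by (intro exI[of _ v] exI[of _ coef] conjI allI ballI impI)
       (use vB repr cb in \<open>auto simp: B_def\<close>)
qed



lemma floor_eq_close: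
  fixes a b s :: real
  assumes "s > 0" "\<lfloor>a / s\<rfloor> = \<lfloor>b / s\<rfloor>"
  shows "\<bar>a - b\<bar> < s"
proof -
  have "of_int \<lfloor>a / s\<rfloor> \<le> a / s" "a / s < of_int \<lfloor>a / s\<rfloor> + 1"
       "of_int \<lfloor>b / s\<rfloor> \<le> b / s" "b / s < of_int \<lfloor>b / s\<rfloor> + 1"
    by linarith+
  then have "\<bar>a / s - b / s\<bar> < 1" using assms(2) by linarith
  then have "\<bar>a - b\<bar> / s < 1" using assms(1) by (simp add: diff_divide_distrib[symmetric])
  then show ?thesis using assms(1) by (simp add: field_simps)
qed

lemma unit_ball_cover:
  assumes isn: "is_norm_on k N" and s: "0 < s"
  shows "\<exists>C. C \<subseteq> unit_ball k N \<and> finite C \<and> card C \<le> nat (2 * \<lceil>2/s\<rceil> + 1) ^ k \<and>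
     (\<forall>y\<in>unit_ball k N. \<exists>c\<in>C. N (\<lambda>i. y i - c i) \<le> real k * s)"
proof -
  interpret knorm k N using isn by (simp add: knorm_def)
  obtain v coef where vB: "\<forall>j<k. v j \<in> unit_ball k N"
    and repr: "\<forall>x\<in>Rk k. \<forall>i. x i = (\<Sum>j<k. coef x j * v j i)"
    and cb: "\<forall>x\<in>unit_ball k N. \<forall>j<k. \<bar>coef x j\<bar> \<le> 2"
    using good_basis[OF isn] by blast
  define B where "B = unit_ball k N"
  define T where "T = \<lceil>2/s\<rceil>"
  define I where "I = PiE {..<k} (\<lambda>_. {-T..T})"
  define idx where "idx x = restrict (\<lambda>j. \<lfloor>coef x j / s\<rfloor>) {..<k}" for x
  have idxI: "idx ` B \<subseteq> I"
  proof
    fix f assume "f \<in> idx ` B"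
    then obtain x where x: "x \<in> B" "f = idx x" by auto
    have "\<lfloor>coef x j / s\<rfloor> \<in> {-T..T}" if j: "j < k" for j
    proof -
      have c2: "\<bar>coef x j\<bar> \<le> 2" using cb x j by (auto simp: B_def)
      have "-2 \<le> coef x j" "coef x j \<le> 2" using c2 by linarith+
      then have "-2/s \<le> coef x j / s" "coef x j / s \<le> 2/s" using divide_right_mono[of "-2" "coef x j" s] divide_right_mono[of "coef x j" 2 s] s by auto
      then have "\<lfloor>-2/s\<rfloor> \<le> \<lfloor>coef x j / s\<rfloor>" "\<lfloor>coef x j / s\<rfloor> \<le> \<lfloor>2/s\<rfloor>" by (auto intro: floor_mono)
      moreover have "\<lfloor>-2/s\<rfloor> = - T" unfolding T_def by (simp add: ceiling_def)
      moreover have "\<lfloor>2/s\<rfloor> \<le> T" unfolding T_def by (rule floor_le_ceiling)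
      ultimately show ?thesis by auto
    qed
    then show "f \<in> I" unfolding x(2) I_def idx_def by auto
  qed
  have finI: "finite I" unfolding I_def by (intro finite_PiE) auto
  have cardI: "card I = nat (2 * T + 1) ^ k" unfolding I_def by (simp add: card_PiE)
  define rep where "rep f = (SOME x. x \<in> B \<and> idx x = f)" for f
  have rep: "rep (idx y) \<in> B \<and> idx (rep (idx y)) = idx y" if "y \<in> B" for y
    using someI[of "\<lambda>x. x \<in> B \<and> idx x = idx y" y] that unfolding rep_def by blast
  define C where "C = rep ` (idx ` B)"
  have CB: "C \<subseteq> B" unfolding C_def using rep by auto
  have finC: "finite C" unfolding C_def using finite_subset[OF idxI finI] by auto
  have cardC: "card C \<le> card I" unfolding C_def
    using card_image_le[OF finite_subset[OF idxI finI], of rep] card_mono[OF finI idxI] by linarith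
  have BR: "x \<in> Rk k" if "x \<in> B" for x using that by (auto simp: B_def unit_ball_def)
  have vR: "v j \<in> Rk k" "N (v j) \<le> 1" if "j < k" for j using vB that by (auto simp: unit_ball_def)
  have cover: "N (\<lambda>i. y i - c i) \<le> real k * s" if y: "y \<in> B" and c: "c \<in> B" and eq: "idx c = idx y" for y c
  proof -
    have close: "\<bar>coef y j - coef c j\<bar> < s" if j: "j < k" for j
    proof -
      have "idx c j = idx y j" using eq by simp
      then have "\<lfloor>coef y j / s\<rfloor> = \<lfloor>coef c j / s\<rfloor>" using j by (simp add: idx_def)
      then show ?thesis by (rule floor_eq_close[OF s])
    qed
    have "(\<lambda>i. y i - c i) = (\<lambda>i. \<Sum>j<k. (coef y j - coef c j) * v j i)"
    proof
      fix i
      have "y i = (\<Sum>j<k. coef y j * v j i)" "c i = (\<Sum>j<k. coef c j * v j i)"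
        using repr BR[OF y] BR[OF c] by blast+
      then show "y i - c i = (\<Sum>j<k. (coef y j - coef c j) * v j i)"
        by (simp add: left_diff_distrib sum_subtractf)
    qed
    then have "N (\<lambda>i. y i - c i) = N (\<lambda>i. \<Sum>j<k. (coef y j - coef c j) * v j i)" by simp
    also have "\<dots> \<le> (\<Sum>j<k. \<bar>coef y j - coef c j\<bar> * N (v j))"
      by (rule sum_bound) (auto intro: vR)
    also have "\<dots> \<le> (\<Sum>j<k. s)"
    proof (rule sum_mono)
      fix j assume "j \<in> {..<k}"
      then have "\<bar>coef y j - coef c j\<bar> \<le> s" "N (v j) \<le> 1" "0 \<le> N (v j)"
        using close vR nonneg by (auto intro: less_imp_le)
      then show "\<bar>coef y j - coef c j\<bar> * N (v j) \<le> s"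
        using mult_mono[of "\<bar>coef y j - coef c j\<bar>" s "N (v j)" 1] s by auto
    qed
    finally show ?thesis by simp
  qed
  show ?thesis
  proof (intro exI[of _ C] conjI ballI)
    show "C \<subseteq> unit_ball k N" using CB by (simp add: B_def)
    show "finite C" by fact
    show "card C \<le> nat (2 * \<lceil>2/s\<rceil> + 1) ^ k" using cardC cardI by (simp add: T_def)
    fix y assume "y \<in> unit_ball k N"
    then have y: "y \<in> B" by (simp add: B_def)
    show "\<exists>c\<in>C. N (\<lambda>i. y i - c i) \<le> real k * s"
      using rep[OF y] y cover[of y "rep (idx y)"] by (auto simp: C_def)
  qed
qed



lemma entropy_le:
  assumes "finite C" "card C \<le> 2 ^ m" "K \<subseteq> (\<Union>c\<in>C. cball c t)" "t > 0"
  shows "entropy_number m K \<le> t"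
  unfolding entropy_number_def
  by (rule cInf_lower) (use assms in \<open>auto intro!: bdd_belowI[of _ 0]\<close>)

lemma unit_ball_zero: "is_norm_on k N \<Longrightarrow> (\<lambda>i. 0) \<in> unit_ball k N"
  using knorm.zero[of k N] by (auto simp: unit_ball_def knorm_def)

lemma inf_facts:
  fixes \<Phi> :: "(nat \<Rightarrow> real) \<Rightarrow> 'a::real_normed_vector"
  assumes "is_norm_on k N"
  shows "0 \<le> (INF y\<in>unit_ball k N. norm (f - \<Phi> y))"
    "(INF y\<in>unit_ball k N. norm (f - \<Phi> y)) \<le> norm (f - \<Phi> (\<lambda>i. 0))"
  using unit_ball_zero[OF assms]
  by (auto intro!: cINF_greatest cINF_lower bdd_belowI2[of _ 0])

lemma sup_facts:
  fixes \<Phi> :: "(nat \<Rightarrow> real) \<Rightarrow> 'a::real_normed_vector"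
  assumes N: "is_norm_on k N" and K: "bounded K" "K \<noteq> {}"
  shows "bdd_above ((\<lambda>f. INF y\<in>unit_ball k N. norm (f - \<Phi> y)) ` K)"
    "0 \<le> (SUP f\<in>K. INF y\<in>unit_ball k N. norm (f - \<Phi> y))"
proof -
  obtain R where R: "\<And>f. f \<in> K \<Longrightarrow> norm f \<le> R" using K(1) by (auto simp: bounded_iff)
  show bdd: "bdd_above ((\<lambda>f. INF y\<in>unit_ball k N. norm (f - \<Phi> y)) ` K)"
  proof (rule bdd_aboveI2[of _ _ "R + norm (\<Phi> (\<lambda>i. 0))"])
    fix f assume "f \<in> K"
    then have "norm (f - \<Phi> (\<lambda>i. 0)) \<le> R + norm (\<Phi> (\<lambda>i. 0))"
      using R norm_triangle_ineq4[of f "\<Phi> (\<lambda>i. 0)"] by fastforce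
    then show "(INF y\<in>unit_ball k N. norm (f - \<Phi> y)) \<le> R + norm (\<Phi> (\<lambda>i. 0))"
      using inf_facts(2)[OF N, of f \<Phi>] by linarith
  qed
  obtain f where f: "f \<in> K" using K(2) by auto
  show "0 \<le> (SUP f\<in>K. INF y\<in>unit_ball k N. norm (f - \<Phi> y))"
    using inf_facts(1)[OF N, of f \<Phi>] cSUP_upper[OF f bdd] by linarith
qed

lemma lip_const:
  assumes N: "is_norm_on k N" and g: "0 \<le> \<gamma>"
  shows "lipschitz_on_ball \<gamma> k N (\<lambda>_. c)"
proof (unfold lipschitz_on_ball_def, intro ballI)
  fix y y' assume "y \<in> unit_ball k N" "y' \<in> unit_ball k N"
  then have "(\<lambda>i. y i - y' i) \<in> Rk k" by (auto simp: unit_ball_def)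
  then have "0 \<le> N (\<lambda>i. y i - y' i)" using knorm.nonneg N by (auto simp: knorm_def)
  then show "norm (c - c) \<le> \<gamma> * N (\<lambda>i. y i - y' i)" using g by simp
qed

lemma fixed_nonneg:
  fixes K :: "'a::real_normed_vector set"
  assumes N: "is_norm_on k N" and K: "bounded K" "K \<noteq> {}" and g: "0 \<le> \<gamma>"
  shows "0 \<le> fixed_lip_width \<gamma> K k N"
  unfolding fixed_lip_width_def
  using lip_const[OF N g]
  by (intro cInf_greatest) (auto intro: sup_facts[OF N K])

lemma lip_width_set_ne: "1 \<le> n \<Longrightarrow> {fixed_lip_width \<gamma> K k N | k N. 1 \<le> k \<and> k \<le> n \<and> is_norm_on k N} \<noteq> {}"
  using l1_norm[of 1] by blast

lemma lip_width_mono: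
  fixes K :: "'a::real_normed_vector set"
  assumes K: "bounded K" "K \<noteq> {}" and g: "0 \<le> \<gamma>" and n: "1 \<le> n" "n \<le> n'"
  shows "lip_width n' \<gamma> K \<le> lip_width n \<gamma> K"
proof -
  have sub: "{fixed_lip_width \<gamma> K k N | k N. 1 \<le> k \<and> k \<le> n \<and> is_norm_on k N} \<subseteq>
     {fixed_lip_width \<gamma> K k N | k N. 1 \<le> k \<and> k \<le> n' \<and> is_norm_on k N}" using n by fastforce
  have bdd: "bdd_below {fixed_lip_width \<gamma> K k N | k N. 1 \<le> k \<and> k \<le> n' \<and> is_norm_on k N}"
    using fixed_nonneg[OF _ K g] by (auto intro!: bdd_belowI[of _ 0])
  show ?thesis unfolding lip_width_def by (rule cInf_superset_mono[OF lip_width_set_ne[OF n(1)] bdd sub])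
qed

lemma lip_width_nonneg:
  fixes K :: "'a::real_normed_vector set"
  assumes K: "bounded K" "K \<noteq> {}" and g: "0 \<le> \<gamma>" and n: "1 \<le> n"
  shows "0 \<le> lip_width n \<gamma> K"
  unfolding lip_width_def
  by (rule cInf_greatest[OF lip_width_set_ne[OF n]]) (use fixed_nonneg[OF _ K g] in auto)

lemma main_bound:
  fixes K :: "'a::real_normed_vector set"
  assumes K: "bounded K" "K \<noteq> {}" and n: "1 \<le> n" and g: "0 \<le> \<gamma>" and r: "0 < r" "r \<le> 1"
    and m: "(7 * real n / r) ^ n \<le> 2 ^ m"
  shows "entropy_number m K - \<gamma> * r \<le> lip_width n \<gamma> K"
  unfolding lip_width_def
proof (rule cInf_greatest[OF lip_width_set_ne[OF n]], clarify)
  fix k N assume k: "1 \<le> k" "k \<le> n" and N: "is_norm_on k N"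
  interpret knorm k N using N by (simp add: knorm_def)
  define s where "s = r / real n"
  have s: "s > 0" using r n by (simp add: s_def)
  obtain C where CB: "C \<subseteq> unit_ball k N" and finC: "finite C"
    and cardC: "card C \<le> nat (2 * \<lceil>2/s\<rceil> + 1) ^ k"
    and cov: "\<forall>y\<in>unit_ball k N. \<exists>c\<in>C. N (\<lambda>i. y i - c i) \<le> real k * s"
    using unit_ball_cover[OF N s] by blast
  have ks: "real k * s \<le> r" using k n r by (simp add: s_def field_simps)
  have card2: "card C \<le> 2 ^ m"
  proof -
    have T: "real_of_int \<lceil>2/s\<rceil> \<le> 2 * real n / r + 1" using s by (simp add: s_def; linarith)
    have nr: "1 \<le> real n / r" using n r by (simp add: field_simps)
    have "0 < 2/s" using s by simp
    then have "0 < real_of_int \<lceil>2/s\<rceil>" using le_of_int_ceiling[of "2/s"] by linarith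
    then have "0 < \<lceil>2/s\<rceil>" by (simp only: of_int_0_less_iff)
    then have c0: "0 \<le> 2 * \<lceil>2/s\<rceil> + 1" by linarith
    have "real (nat (2 * \<lceil>2/s\<rceil> + 1)) = 2 * real_of_int \<lceil>2/s\<rceil> + 1"
      using of_nat_nat[OF c0, where 'a=real] by simp
    also have "\<dots> \<le> 7 * real n / r" using T nr by simp
    finally have b: "real (nat (2 * \<lceil>2/s\<rceil> + 1)) \<le> 7 * real n / r" .
    have "real (card C) \<le> real (nat (2 * \<lceil>2/s\<rceil> + 1)) ^ k" using cardC
      by (metis of_nat_le_iff of_nat_power)
    also have "\<dots> \<le> (7 * real n / r) ^ k" by (rule power_mono[OF b]) simp
    also have "\<dots> \<le> (7 * real n / r) ^ n" using nr k by (intro power_increasing) auto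
    also have "\<dots> \<le> 2 ^ m" by fact
    finally show ?thesis by (metis of_nat_le_iff of_nat_numeral of_nat_power)
  qed
  show "entropy_number m K - \<gamma> * r \<le> fixed_lip_width \<gamma> K k N"
    unfolding fixed_lip_width_def
  proof (rule cInf_greatest, use lip_const[OF N g] in blast, clarify)
    fix \<Phi> :: "(nat \<Rightarrow> real) \<Rightarrow> 'a" assume L: "lipschitz_on_ball \<gamma> k N \<Phi>"
    define S where "S = (SUP f\<in>K. INF y\<in>unit_ball k N. norm (f - \<Phi> y))"
    have S0: "0 \<le> S" unfolding S_def by (rule sup_facts(2)[OF N K])
    have "entropy_number m K \<le> S + \<gamma> * r"
    proof (rule field_le_epsilon)
      fix \<eta> :: real assume \<eta>: "0 < \<eta>"
      show "entropy_number m K \<le> S + \<gamma> * r + \<eta>"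
      proof (rule entropy_le)
        show "finite (\<Phi> ` C)" using finC by simp
        show "card (\<Phi> ` C) \<le> 2 ^ m" using card_image_le[OF finC, of \<Phi>] card2 by linarith
        show "S + \<gamma> * r + \<eta> > 0" using S0 g r \<eta> by (simp add: add_nonneg_pos)
        show "K \<subseteq> (\<Union>c\<in>\<Phi> ` C. cball c (S + \<gamma> * r + \<eta>))"
        proof
          fix f assume f: "f \<in> K"
          have "(INF y\<in>unit_ball k N. norm (f - \<Phi> y)) \<le> S"
            unfolding S_def by (rule cSUP_upper[OF f sup_facts(1)[OF N K]])
          then have "(INF y\<in>unit_ball k N. norm (f - \<Phi> y)) < S + \<eta>" using \<eta> by linarith
          then obtain y where y: "y \<in> unit_ball k N" "norm (f - \<Phi> y) < S + \<eta>"
            using cInf_lessD[of "(\<lambda>y. norm (f - \<Phi> y)) ` unit_ball k N"] unit_ball_zero[OF N] by blast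
          obtain c where c: "c \<in> C" "N (\<lambda>i. y i - c i) \<le> real k * s" using cov y(1) by blast
          have "norm (\<Phi> y - \<Phi> c) \<le> \<gamma> * N (\<lambda>i. y i - c i)"
            using L y(1) c(1) CB unfolding lipschitz_on_ball_def by blast
          also have "\<dots> \<le> \<gamma> * r" using c(2) ks g by (intro mult_left_mono) auto
          finally have "norm (\<Phi> c - f) \<le> S + \<gamma> * r + \<eta>"
            using y(2) norm_triangle_ineq[of "\<Phi> c - \<Phi> y" "\<Phi> y - f"] norm_minus_commute[of "\<Phi> c" "\<Phi> y"]
              norm_minus_commute[of f "\<Phi> y"] by simp
          then show "f \<in> (\<Union>c\<in>\<Phi> ` C. cball c (S + \<gamma> * r + \<eta>))"
            using c(1) by (auto simp: dist_norm)
        qed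
      qed
    qed
    then show "entropy_number m K - \<gamma> * r \<le> S" by simp
  qed
qed



lemma eventual_to_all:
  fixes K :: "'a::real_normed_vector set"
  assumes K: "bounded K" "K \<noteq> {}" and g: "0 \<le> \<gamma>" and st: "1 \<le> st" "st \<le> n0" and C: "C > 0"
    and ev: "\<forall>n\<ge>n0. C * h n \<le> lip_width n \<gamma> K" and hpos: "\<forall>n\<ge>st. h n > (0::real)"
  shows "\<exists>C'>0. \<forall>n\<ge>st. C' * h n \<le> lip_width n \<gamma> K"
proof -
  define H where "H = Max (h ` {st..n0})"
  have H: "h n \<le> H" if "n \<in> {st..n0}" for n unfolding H_def using that by (intro Max_ge) auto
  have Hpos: "H > 0" using H[of st] hpos st by force
  define C' where "C' = min C (C * h n0 / H)"
  have hn0: "h n0 > 0" using hpos st by auto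
  have C'pos: "C' > 0" using C hn0 Hpos by (simp add: C'_def)
  show ?thesis
  proof (intro exI[of _ C'] conjI C'pos allI impI)
    fix n assume n: "st \<le> n"
    have hn: "h n > 0" using hpos n by auto
    show "C' * h n \<le> lip_width n \<gamma> K"
    proof (cases "n0 \<le> n")
      case True
      have "C' * h n \<le> C * h n" using hn by (intro mult_right_mono) (auto simp: C'_def)
      then show ?thesis using ev True by force
    next
      case False
      have "C' * h n \<le> (C * h n0 / H) * h n" using hn by (intro mult_right_mono) (auto simp: C'_def)
      also have "\<dots> \<le> (C * h n0 / H) * H" using H[of n] n False C hn0 Hpos
        by (intro mult_left_mono) auto
      also have "\<dots> = C * h n0" using Hpos by simp
      also have "\<dots> \<le> lip_width n0 \<gamma> K" using ev by auto
      also have "\<dots> \<le> lip_width n \<gamma> K" using False n st by (intro lip_width_mono[OF K g]) auto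
      finally show ?thesis .
    qed
  qed
qed

lemma log2_le_self: "1 \<le> n \<Longrightarrow> log 2 (real n) \<le> real n"
proof -
  assume n: "1 \<le> n"
  have "real n \<le> 2 powr real n"
    using less_exp[of n] by (simp add: powr_realpow)
  then have "log 2 (real n) \<le> log 2 (2 powr real n)" using n by (subst log_le_cancel_iff) auto
  then show ?thesis by simp
qed

lemma part_poly:
  fixes K :: "'a::real_normed_vector set"
  assumes K: "bounded K" "K \<noteq> {}" and c1: "c1 > 0" and a: "a \<ge> 0" and g: "\<gamma> > 0"
    and hyp: "\<forall>m::nat\<ge>2. entropy_number m K > c1 * (log 2 m) powr b / real m powr a"
  shows "\<exists>C>0. \<forall>n::nat\<ge>2. C * ((log 2 n) powr (b - a) / real n powr a) \<le> lip_width n \<gamma> K"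
proof -
  define h where "h n = (log 2 (real n)) powr (b - a) / real n powr a" for n :: nat
  define q :: nat where "q = nat \<lceil>1 + a + \<bar>b - a\<bar>\<rceil> + 4"
  have q: "real q \<ge> 1 + a + \<bar>b - a\<bar> + 4" unfolding q_def
    using real_nat_ceiling_ge[of "1 + a + \<bar>b - a\<bar>"] by simp
  have q4: "q \<ge> 4" unfolding q_def by simp
  define cq where "cq = log 2 (2 * real q) + 2"
  have lq: "log 2 (2 * real q) \<ge> 0" using q4 by simp
  have cq: "cq > 0" using lq by (simp add: cq_def)
  define A where "A = c1 * min 1 (cq powr b) / (2 * real q) powr a"
  have A: "A > 0" unfolding A_def using c1 cq q4 by simp
  define n0 where "n0 = max 2 (nat \<lceil>14 * \<gamma> / A\<rceil>)"
  have ev: "\<forall>n\<ge>n0. A / 2 * h n \<le> lip_width n \<gamma> K"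
  proof (intro allI impI)
    fix n assume n0n: "n0 \<le> n"
    define nn where "nn = real n"
    have n2: "nn \<ge> 2" using n0n by (simp add: n0_def nn_def)
    have nnA: "nn \<ge> 14 * \<gamma> / A" using n0n real_nat_ceiling_ge[of "14 * \<gamma> / A"] unfolding n0_def nn_def
      by (metis max.bounded_iff of_nat_le_iff order_trans)
    define L where "L = log 2 nn"
    have L1: "L \<ge> 1" using n2 by (simp add: L_def)
    have Lpos: "L > 0" using L1 by simp
    have Lnn: "L \<le> nn" unfolding L_def nn_def using log2_le_self[of n] n2 by (simp add: nn_def)
    define x where "x = real q * nn * L"
    have x8: "x \<ge> 8"
    proof -
      have "real q * nn \<ge> 4 * 2" using q4 n2 by (intro mult_mono) auto
      then have "real q * nn * L \<ge> 8 * 1" using L1 by (intro mult_mono) auto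
      then show ?thesis by (simp add: x_def)
    qed
    define m where "m = nat \<lceil>x\<rceil>"
    have mx: "real m \<ge> x" unfolding m_def by (rule real_nat_ceiling_ge)
    have mx2: "real m \<le> 2 * x" unfolding m_def using x8 by linarith
    have m2: "m \<ge> 2" using mx x8 by linarith
    have xnn: "x \<ge> nn"
    proof -
      have "real q * L \<ge> 1 * 1" using q4 L1 by (intro mult_mono) auto
      then have "nn * (real q * L) \<ge> nn * 1" using n2 by (intro mult_left_mono) auto
      then show ?thesis by (simp add: x_def algebra_simps)
    qed
    have logm_lo: "log 2 (real m) \<ge> L" unfolding L_def using mx xnn n2 by (subst log_le_cancel_iff) auto
    have logm_hi: "log 2 (real m) \<le> cq * L"
    proof -
      have "log 2 (real m) \<le> log 2 (2 * x)" using mx2 x8 m2 by (subst log_le_cancel_iff) auto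
      also have "2 * x = (2 * real q) * nn * L" by (simp add: x_def)
      also have "log 2 ((2 * real q) * nn * L) = log 2 (2 * real q) + L + log 2 L"
      proof -
        have "log 2 ((2 * real q) * nn * L) = log 2 ((2 * real q) * nn) + log 2 L"
          using q4 n2 Lpos by (intro log_mult_pos) auto
        moreover have "log 2 ((2 * real q) * nn) = log 2 (2 * real q) + L"
          unfolding L_def using q4 n2 by (intro log_mult_pos) auto
        ultimately show ?thesis by simp
      qed
      also have "log 2 L \<le> L" unfolding L_def using Lnn L1 n2 by (subst log_le_cancel_iff) (auto simp: L_def)
      then have "log 2 (2 * real q) + L + log 2 L \<le> log 2 (2 * real q) * L + 2 * L"
        using lq L1 mult_left_mono[of 1 L "log 2 (2 * real q)"] by simp
      finally show ?thesis by (simp add: cq_def algebra_simps)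
    qed
    have num: "(log 2 (real m)) powr b \<ge> min 1 (cq powr b) * L powr b"
    proof (cases "b \<ge> 0")
      case True
      have "L powr b \<le> (log 2 (real m)) powr b" using logm_lo Lpos True by (intro powr_mono2) auto
      moreover have "min 1 (cq powr b) * L powr b \<le> L powr b"
        using mult_right_mono[of "min 1 (cq powr b)" 1 "L powr b"] by simp
      ultimately show ?thesis by linarith
    next
      case False
      have "(cq * L) powr b \<le> (log 2 (real m)) powr b" using logm_lo logm_hi Lpos False
        by (intro powr_mono2') auto
      moreover have "(cq * L) powr b = cq powr b * L powr b" using cq Lpos by (simp add: powr_mult)
      moreover have "min 1 (cq powr b) * L powr b \<le> cq powr b * L powr b"
        by (intro mult_right_mono) auto
      ultimately show ?thesis by linarith
    qed
    have den: "real m powr a \<le> (2 * real q) powr a * (nn powr a * L powr a)"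
    proof -
      have "real m powr a \<le> (2 * x) powr a" using mx2 a m2 by (intro powr_mono2) auto
      also have "(2 * x) = (2 * real q) * (nn * L)" by (simp add: x_def)
      also have "((2 * real q) * (nn * L)) powr a = (2 * real q) powr a * (nn powr a * L powr a)"
        using q4 n2 Lpos by (simp add: powr_mult)
      finally show ?thesis .
    qed
    have hn: "h n = L powr b / L powr a / nn powr a"
      unfolding h_def L_def nn_def using Lpos by (simp add: powr_diff L_def nn_def)
    have hpos: "h n > 0" unfolding hn using Lpos n2 by simp
    have gm: "c1 * (log 2 (real m)) powr b / real m powr a \<ge> A * h n"
    proof -
      have "A * h n = (c1 * (min 1 (cq powr b) * L powr b)) / ((2 * real q) powr a * (nn powr a * L powr a))"
        unfolding A_def hn by (simp add: field_simps)
      also have "\<dots> \<le> c1 * (log 2 (real m)) powr b / real m powr a"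
        using num den c1 m2 by (intro frac_le) (auto intro!: mult_left_mono)
      finally show ?thesis .
    qed
    have Em: "entropy_number m K > A * h n" using hyp m2 gm by force
    define r where "r = min 1 (A * h n / (2 * \<gamma>))"
    have r: "0 < r" "r \<le> 1" "\<gamma> * r \<le> A * h n / 2" using A hpos g
      by (auto simp: r_def min_def field_simps)
    have key: "7 * nn / r \<le> nn ^ q"
    proof -
      have nnq: "nn ^ q = nn * nn ^ (q - 1)" using q4 by (metis Suc_diff_le Suc_le_eq le_trans less_Suc_eq_le not_less_eq_eq one_le_numeral power_Suc zero_less_Suc power_0 diff_Suc_1)
      have "nn ^ (q - 1) \<ge> 2 ^ (q - 1)" using n2 by (intro power_mono) auto
      moreover have "(2::real) ^ (q - 1) \<ge> 2 ^ 3" using q4 by (intro power_increasing) auto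
      ultimately have p8: "nn ^ (q - 1) \<ge> 8" by simp
      have lb: "L powr (b - a) \<ge> nn powr (- \<bar>b - a\<bar>)"
      proof (cases "b - a \<ge> 0")
        case True
        have "L powr (b - a) \<ge> 1" using L1 True by (simp add: ge_one_powr_ge_zero)
        moreover have "nn powr (- \<bar>b - a\<bar>) \<le> 1" using powr_mono[of "- \<bar>b - a\<bar>" 0 nn] n2 by simp
        ultimately show ?thesis by linarith
      next
        case False
        have e: "- \<bar>b - a\<bar> = b - a" using False by simp
        show ?thesis unfolding e using powr_mono2'[of "b - a" L nn] False Lnn Lpos by simp
      qed
      have hq: "h n * nn ^ (q - 1) \<ge> nn"
      proof -
        have "h n * nn ^ (q - 1) = L powr (b - a) * nn powr (real q - 1 - a)"
          unfolding h_def L_def nn_def using n2 q4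
          by (simp add: powr_realpow[symmetric] powr_diff nn_def of_nat_diff)
        also have "\<dots> \<ge> nn powr (- \<bar>b - a\<bar>) * nn powr (real q - 1 - a)"
          using lb by (intro mult_right_mono) auto
        also have "nn powr (- \<bar>b - a\<bar>) * nn powr (real q - 1 - a) = nn powr (real q - 1 - a - \<bar>b - a\<bar>)"
          using n2 by (simp add: powr_add[symmetric])
        also have "nn powr (real q - 1 - a - \<bar>b - a\<bar>) \<ge> nn powr 1"
          using q n2 by (intro powr_mono) auto
        finally show ?thesis using n2 by simp
      qed
      show ?thesis
      proof (cases "A * h n / (2 * \<gamma>) \<le> 1")
        case True
        then have rr: "r = A * h n / (2 * \<gamma>)" by (simp add: r_def)
        have "7 * nn / r = 14 * \<gamma> * nn / (A * h n)" unfolding rr using g A hpos by (simp add: field_simps)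
        also have "\<dots> \<le> nn ^ q"
        proof -
          have "14 * \<gamma> \<le> A * nn" using nnA A by (simp add: field_simps)
          also have "A * nn \<le> A * (h n * nn ^ (q - 1))" using hq A by simp
          finally have "14 * \<gamma> * nn \<le> A * h n * (nn * nn ^ (q - 1))"
            using n2 mult_right_mono[of "14 * \<gamma>" "A * (h n * nn ^ (q - 1))" nn] by (simp add: algebra_simps)
          then show ?thesis using A hpos nnq by (simp add: field_simps)
        qed
        finally show ?thesis .
      next
        case False
        then have "r = 1" by (simp add: r_def)
        then have "7 * nn / r = 7 * nn" by simp
        also have "\<dots> \<le> nn * 8" using n2 by simp
        also have "\<dots> \<le> nn * nn ^ (q - 1)" using p8 n2 by (intro mult_left_mono) auto
        finally show ?thesis using nnq by simp
      qed
    qed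
    have pow: "(7 * real n / r) ^ n \<le> 2 ^ m"
    proof -
      have "(7 * real n / r) ^ n \<le> (nn ^ q) ^ n" using key r n2 by (intro power_mono) (auto simp: nn_def)
      also have "(nn ^ q) ^ n = 2 powr x"
      proof -
        have "(nn ^ q) ^ n = nn powr (real q * real n)" using n2 by (simp add: powr_realpow[symmetric] powr_powr power_mult[symmetric])
        also have "nn powr (real q * real n) = (2 powr L) powr (real q * real n)"
          using n2 by (simp add: L_def)
        also have "(2 powr L) powr (real q * real n) = 2 powr x" by (simp add: powr_powr x_def nn_def algebra_simps)
        finally show ?thesis .
      qed
      also have "2 powr x \<le> 2 powr (real m)" using mx by simp
      also have "\<dots> = 2 ^ m" by (simp add: powr_realpow)
      finally show ?thesis .
    qed
    have "entropy_number m K - \<gamma> * r \<le> lip_width n \<gamma> K"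
      using main_bound[OF K _ less_imp_le[OF g] r(1) r(2) pow] n2 by (simp add: nn_def)
    then show "A / 2 * h n \<le> lip_width n \<gamma> K" using Em r(3) by simp
  qed
  have hpos: "\<forall>n\<ge>2. h n > 0"
  proof (intro allI impI)
    fix n :: nat assume "2 \<le> n"
    then have l: "log 2 (real n) > 0" by simp
    have "log 2 (real n) powr (b - a) > 0" using l by simp
    moreover have "real n powr a > 0" using \<open>2 \<le> n\<close> by simp
    ultimately show "h n > 0" unfolding h_def by simp
  qed
  obtain C where "C > 0" "\<forall>n\<ge>2. C * h n \<le> lip_width n \<gamma> K"
    using eventual_to_all[OF K less_imp_le[OF g] _ _ _ ev hpos] A by (auto simp: n0_def)
  then show ?thesis unfolding h_def by blast
qed



lemma log2_le_twice: assumes y: "y \<ge> (1::real)" shows "log 2 y \<le> 2 * y"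
proof -
  define k where "k = nat \<lceil>y\<rceil>"
  have k1: "real k \<ge> y" unfolding k_def by (rule real_nat_ceiling_ge)
  have k2: "real k \<le> y + 1" unfolding k_def using y by linarith
  have "k \<ge> 1" using k1 y by linarith
  have "log 2 y \<le> log 2 (real k)" using k1 y by (subst log_le_cancel_iff) auto
  also have "\<dots> \<le> real k" using log2_le_self[OF \<open>k \<ge> 1\<close>] .
  finally show ?thesis using k2 y by linarith
qed

lemma log_growth:
  assumes D: "D > 0" and mu: "\<mu> > 0" and p: "p > 0"
  shows "\<exists>n0::nat. \<forall>n\<ge>n0. log 2 (D * real n) \<le> \<mu> * real n powr p"
proof -
  define Y where "Y = max 1 ((\<bar>log 2 D\<bar> + 4/p) / \<mu>)"
  have Y1: "Y \<ge> 1" by (simp add: Y_def)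
  define n0 where "n0 = nat \<lceil>Y powr (2/p)\<rceil> + 1"
  show ?thesis
  proof (intro exI[of _ n0] allI impI)
    fix n assume nn0: "n0 \<le> n"
    define nn where "nn = real n"
    have nnY: "nn \<ge> Y powr (2/p)" using nn0 real_nat_ceiling_ge[of "Y powr (2/p)"] unfolding n0_def nn_def
      by linarith
    have nn1: "nn \<ge> 1" using nn0 unfolding n0_def nn_def by linarith
    define y where "y = nn powr (p/2)"
    have yY: "y \<ge> Y"
    proof -
      have "(Y powr (2/p)) powr (p/2) \<le> nn powr (p/2)" using nnY p Y1 by (intro powr_mono2) auto
      moreover have "(Y powr (2/p)) powr (p/2) = Y" using p Y1 by (simp add: powr_powr)
      ultimately show ?thesis by (simp add: y_def)
    qed
    have y1: "y \<ge> 1" using yY Y1 by linarith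
    have nny: "nn = y powr (2/p)" unfolding y_def using p nn1 by (simp add: powr_powr)
    have "log 2 nn = (2/p) * log 2 y" unfolding nny by (simp add: log_powr)
    also have "\<dots> \<le> (2/p) * (2 * y)" using log2_le_twice[OF y1] p by (intro mult_left_mono) auto
    finally have lnn: "log 2 nn \<le> (4/p) * y" by simp
    have "log 2 (D * nn) = log 2 D + log 2 nn" using D nn1 by (intro log_mult_pos) auto
    also have "\<dots> \<le> \<bar>log 2 D\<bar> * y + (4/p) * y" using lnn y1
      using mult_left_mono[of 1 y "\<bar>log 2 D\<bar>"] by linarith
    also have "\<dots> = (\<bar>log 2 D\<bar> + 4/p) * y" by (simp add: algebra_simps)
    also have "\<dots> \<le> (\<mu> * Y) * y"
    proof -
      have "(\<bar>log 2 D\<bar> + 4/p) / \<mu> \<le> Y" unfolding Y_def by simp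
      then have "\<bar>log 2 D\<bar> + 4/p \<le> \<mu> * Y" using mu by (simp add: field_simps)
      then show ?thesis using y1 by (intro mult_right_mono) auto
    qed
    also have "\<dots> \<le> (\<mu> * y) * y" using yY mu y1 by (intro mult_right_mono mult_left_mono) auto
    also have "(\<mu> * y) * y = \<mu> * nn powr p" unfolding y_def using nn1 by (simp add: powr_add[symmetric])
    finally show "log 2 (D * real n) \<le> \<mu> * real n powr p" by (simp add: nn_def)
  qed
qed

lemma part_exp:
  fixes K :: "'a::real_normed_vector set"
  assumes K: "bounded K" "K \<noteq> {}" and c1: "c1 > 0" and c: "c > 0" and al: "0 < \<alpha>" "\<alpha> < 1"
    and g: "\<gamma> > 0"
    and hyp: "\<forall>m::nat\<ge>1. entropy_number m K > c1 * 2 powr (- c * real m powr \<alpha>)"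
  shows "\<exists>C>0. \<exists>c2>0. \<forall>n::nat\<ge>1. C * 2 powr (- c2 * real n powr (\<alpha> / (1 - \<alpha>))) \<le> lip_width n \<gamma> K"
proof -
  define p where "p = \<alpha> / (1 - \<alpha>)"
  have p: "p > 0" using al by (simp add: p_def)
  have ap: "\<alpha> * (1 + p) = p" using al by (simp add: p_def field_simps)
  define lam where "lam = max 1 ((4 * c) powr (1 / (1 - \<alpha>)))"
  have lam1: "lam \<ge> 1" by (simp add: lam_def)
  have lam4: "lam powr (1 - \<alpha>) \<ge> 4 * c"
  proof -
    have "((4 * c) powr (1 / (1 - \<alpha>))) powr (1 - \<alpha>) \<le> lam powr (1 - \<alpha>)"
      using al by (intro powr_mono2) (auto simp: lam_def)
    moreover have "((4 * c) powr (1 / (1 - \<alpha>))) powr (1 - \<alpha>) = 4 * c" using al c by (simp add: powr_powr)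
    ultimately show ?thesis by simp
  qed
  define c2 where "c2 = c * (2 * lam) powr \<alpha>"
  have c2pos: "c2 > 0" using c lam1 by (simp add: c2_def)
  have c2lam: "c2 \<le> lam / 2"
  proof -
    have "(2 * lam) powr \<alpha> = 2 powr \<alpha> * lam powr \<alpha>" using lam1 by (simp add: powr_mult)
    moreover have "(2::real) powr \<alpha> \<le> 2 powr 1" using al by (intro powr_mono) auto
    ultimately have "(2 * lam) powr \<alpha> \<le> 2 * lam powr \<alpha>" using lam1
      by (simp add: mult_right_mono)
    then have "c2 \<le> 2 * (c * lam powr \<alpha>)" unfolding c2_def using c by (simp add: mult_left_mono)
    moreover have "lam = lam powr \<alpha> * lam powr (1 - \<alpha>)" using lam1 by (simp add: powr_add[symmetric])
    then have "lam \<ge> lam powr \<alpha> * (4 * c)" using lam4 lam1 by (metis mult_left_mono powr_ge_zero)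
    ultimately show ?thesis by (simp add: algebra_simps)
  qed
  define D where "D = max 7 (14 * \<gamma> / c1)"
  have D: "D > 0" "D \<ge> 7" "D \<ge> 14 * \<gamma> / c1" by (auto simp: D_def)
  obtain n1 :: nat where n1: "\<forall>n\<ge>n1. log 2 (D * real n) \<le> lam / 2 * real n powr p"
    using log_growth[OF D(1) _ p, of "lam / 2"] lam1 by auto
  define n0 where "n0 = max 1 n1"
  define h where "h n = 2 powr (- c2 * real n powr p)" for n :: nat
  have ev: "\<forall>n\<ge>n0. c1 / 2 * h n \<le> lip_width n \<gamma> K"
  proof (intro allI impI)
    fix n assume nn0: "n0 \<le> n"
    define nn where "nn = real n"
    have nn1: "nn \<ge> 1" using nn0 by (simp add: n0_def nn_def)
    have hpos: "h n > 0" by (simp add: h_def)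
    have h1: "h n \<le> 1"
    proof -
      have "0 \<le> c2 * real n powr p" using c2pos by simp
      then show ?thesis unfolding h_def using powr_mono[of "-(c2 * real n powr p)" 0 2] by simp
    qed
    define x where "x = lam * nn powr (1 + p)"
    have x1: "x \<ge> 1"
    proof -
      have "nn powr (1 + p) \<ge> 1" using nn1 p by (intro ge_one_powr_ge_zero) auto
      then show ?thesis unfolding x_def using lam1 mult_mono[of 1 lam 1 "nn powr (1 + p)"] by simp
    qed
    define m where "m = nat \<lceil>x\<rceil>"
    have mx: "real m \<ge> x" unfolding m_def by (rule real_nat_ceiling_ge)
    have mx2: "real m \<le> 2 * x" unfolding m_def using x1 by linarith
    have m1: "m \<ge> 1" using mx x1 by linarith
    have mpow: "c * real m powr \<alpha> \<le> c2 * nn powr p"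
    proof -
      have "real m powr \<alpha> \<le> (2 * x) powr \<alpha>" using mx2 m1 al by (intro powr_mono2) auto
      also have "(2 * x) powr \<alpha> = (2 * lam) powr \<alpha> * (nn powr (1 + p)) powr \<alpha>"
        unfolding x_def using lam1 nn1 by (simp add: powr_mult[symmetric] mult.assoc)
      also have "(nn powr (1 + p)) powr \<alpha> = nn powr p" using ap by (simp add: powr_powr mult.commute)
      finally show ?thesis unfolding c2_def using c by (simp add: mult_left_mono mult.assoc)
    qed
    have gm: "c1 * 2 powr (- c * real m powr \<alpha>) \<ge> c1 * h n"
      unfolding h_def using mpow c1 by (intro mult_left_mono) (auto simp: nn_def)
    have Em: "entropy_number m K > c1 * h n" using hyp m1 gm by force
    define r where "r = min 1 (c1 * h n / (2 * \<gamma>))"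
    have r: "0 < r" "r \<le> 1" "\<gamma> * r \<le> c1 * h n / 2" using c1 hpos g
      by (auto simp: r_def min_def field_simps)
    have q1: "7 * nn / r \<le> D * nn / h n"
    proof (cases "c1 * h n / (2 * \<gamma>) \<le> 1")
      case True
      then have rr: "r = c1 * h n / (2 * \<gamma>)" by (simp add: r_def)
      have "7 * nn / r = (14 * \<gamma> / c1) * nn / h n" unfolding rr using c1 hpos g by (simp add: field_simps)
      also have "\<dots> \<le> D * nn / h n" using D(3) nn1 hpos by (intro divide_right_mono mult_right_mono) auto
      finally show ?thesis .
    next
      case False
      then have "r = 1" by (simp add: r_def)
      then have "7 * nn / r = 7 * nn" by simp
      also have "\<dots> \<le> D * nn" using D(2) nn1 by (intro mult_right_mono) auto
      also have "\<dots> \<le> D * nn / h n" using hpos h1 D nn1 by (simp add: field_simps mult_left_le)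
      finally show ?thesis .
    qed
    have q0: "0 < 7 * nn / r" using r nn1 by simp
    have lg: "log 2 (7 * nn / r) \<le> lam * nn powr p"
    proof -
      have "log 2 (7 * nn / r) \<le> log 2 (D * nn / h n)" using q1 q0 by (subst log_le_cancel_iff) auto
      also have "log 2 (D * nn / h n) = log 2 (D * nn) - log 2 (h n)" using D nn1 hpos by (simp add: log_divide)
      also have "log 2 (h n) = - c2 * nn powr p" by (simp add: h_def nn_def)
      also have "log 2 (D * nn) \<le> lam / 2 * nn powr p" using n1 nn0 by (simp add: n0_def nn_def)
      then have "log 2 (D * nn) - - c2 * nn powr p \<le> lam / 2 * nn powr p + lam / 2 * nn powr p"
        using c2lam mult_right_mono[of c2 "lam/2" "nn powr p"] by simp
      finally show ?thesis by simp
    qed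
    have pow: "(7 * real n / r) ^ n \<le> 2 ^ m"
    proof -
      have "(7 * nn / r) ^ n = (2 powr (log 2 (7 * nn / r))) ^ n" using q0 by simp
      also have "\<dots> = 2 powr (log 2 (7 * nn / r) * nn)" by (simp add: powr_realpow[symmetric] powr_powr nn_def)
      also have "\<dots> \<le> 2 powr (lam * nn powr p * nn)" using lg nn1 by (simp add: mult_right_mono)
      also have "lam * nn powr p * nn = x" unfolding x_def using nn1 by (simp add: powr_add mult.assoc mult.commute)
      also have "2 powr x \<le> 2 powr (real m)" using mx by simp
      also have "\<dots> = 2 ^ m" by (simp add: powr_realpow)
      finally show ?thesis by (simp add: nn_def)
    qed
    have "entropy_number m K - \<gamma> * r \<le> lip_width n \<gamma> K"
      using main_bound[OF K _ less_imp_le[OF g] r(1) r(2) pow] nn1 by (simp add: nn_def)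
    then show "c1 / 2 * h n \<le> lip_width n \<gamma> K" using Em r(3) by simp
  qed
  have hpos: "\<forall>n\<ge>1. h n > 0" by (simp add: h_def)
  obtain C where "C > 0" "\<forall>n\<ge>1. C * h n \<le> lip_width n \<gamma> K"
    using eventual_to_all[OF K less_imp_le[OF g] _ _ _ ev hpos] c1 by (auto simp: n0_def)
  then show ?thesis unfolding h_def p_def using c2pos by blast
qed



lemma entropy_empty: "entropy_number m {} = (0::real)"
proof -
  have "{eps. eps > 0 \<and> (\<exists>C. finite C \<and> card C \<le> 2 ^ m \<and> ({}::'a::real_normed_vector set) \<subseteq> (\<Union>c\<in>C. cball c eps))}
        = {0<..}" by auto
  then show ?thesis unfolding entropy_number_def by simp
qed

lemma rad_nonneg:
  fixes K :: "'a::real_normed_vector set"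
  assumes K: "bounded K" "K \<noteq> {}"
  shows "0 \<le> rad K"
  unfolding rad_def
proof (rule cInf_greatest, simp, clarify)
  fix g :: 'a
  obtain R where R: "\<And>f. f \<in> K \<Longrightarrow> norm f \<le> R" using K(1) by (auto simp: bounded_iff)
  obtain f0 where f0: "f0 \<in> K" using K(2) by auto
  have bdd: "bdd_above ((\<lambda>f. norm (f - g)) ` K)"
  proof (rule bdd_aboveI2[of _ _ "R + norm g"])
    fix f assume "f \<in> K"
    then show "norm (f - g) \<le> R + norm g" using R norm_triangle_ineq4[of f g] by fastforce
  qed
  show "0 \<le> (SUP f\<in>K. norm (f - g))" using cSUP_upper[OF f0 bdd] norm_ge_zero[of "f0 - g"] by linarith
qed

lemma lip_width_gamma_mono:
  fixes K :: "'a::real_normed_vector set"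
  assumes K: "bounded K" "K \<noteq> {}" and g: "0 \<le> \<gamma>" "\<gamma> \<le> \<gamma>'" and n: "1 \<le> n"
  shows "lip_width n \<gamma>' K \<le> lip_width n \<gamma> K"
  unfolding lip_width_def
proof (rule cInf_greatest[OF lip_width_set_ne[OF n]], clarify)
  fix k N assume k: "1 \<le> k" "k \<le> n" and N: "is_norm_on k N"
  have g': "0 \<le> \<gamma>'" using g by linarith
  have bdd: "bdd_below {fixed_lip_width \<gamma>' K k N | k N. 1 \<le> k \<and> k \<le> n \<and> is_norm_on k N}"
    using fixed_nonneg[OF _ K g'] by (auto intro!: bdd_belowI[of _ 0])
  have "Inf {fixed_lip_width \<gamma>' K k N | k N. 1 \<le> k \<and> k \<le> n \<and> is_norm_on k N} \<le> fixed_lip_width \<gamma>' K k N"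
    using k N by (intro cInf_lower[OF _ bdd]) auto
  also have "fixed_lip_width \<gamma>' K k N \<le> fixed_lip_width \<gamma> K k N"
    unfolding fixed_lip_width_def
  proof (rule cInf_superset_mono)
    show "(\<lambda>\<Phi>. SUP f\<in>K. INF y\<in>unit_ball k N. norm (f - \<Phi> y)) ` {\<Phi>. lipschitz_on_ball \<gamma> k N \<Phi>} \<noteq> {}"
      using lip_const[OF N g(1)] by blast
    show "bdd_below ((\<lambda>\<Phi>. SUP f\<in>K. INF y\<in>unit_ball k N. norm (f - \<Phi> y)) ` {\<Phi>. lipschitz_on_ball \<gamma>' k N \<Phi>})"
      by (rule bdd_belowI[of _ 0]) (auto intro: sup_facts(2)[OF N K])
    have "lipschitz_on_ball \<gamma>' k N \<Phi>" if "lipschitz_on_ball \<gamma> k N \<Phi>" for \<Phi> :: "(nat \<Rightarrow> real) \<Rightarrow> 'a"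
      unfolding lipschitz_on_ball_def
    proof (intro ballI)
      fix y y' assume y: "y \<in> unit_ball k N" "y' \<in> unit_ball k N"
      then have "(\<lambda>i. y i - y' i) \<in> Rk k" by (auto simp: unit_ball_def)
      then have "0 \<le> N (\<lambda>i. y i - y' i)" using knorm.nonneg N by (auto simp: knorm_def)
      then have "\<gamma> * N (\<lambda>i. y i - y' i) \<le> \<gamma>' * N (\<lambda>i. y i - y' i)" using g by (intro mult_right_mono) auto
      then show "norm (\<Phi> y - \<Phi> y') \<le> \<gamma>' * N (\<lambda>i. y i - y' i)"
        using that y unfolding lipschitz_on_ball_def by fastforce
    qed
    then show "(\<lambda>\<Phi>. SUP f\<in>K. INF y\<in>unit_ball k N. norm (f - \<Phi> y)) ` {\<Phi>. lipschitz_on_ball \<gamma> k N \<Phi>} \<subseteq>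
      (\<lambda>\<Phi>. SUP f\<in>K. INF y\<in>unit_ball k N. norm (f - \<Phi> y)) ` {\<Phi>. lipschitz_on_ball \<gamma>' k N \<Phi>}" by blast
  qed
  finally show "Inf {fixed_lip_width \<gamma>' K k N | k N. 1 \<le> k \<and> k \<le> n \<and> is_norm_on k N} \<le> fixed_lip_width \<gamma> K k N" .
qed

theorem theorem4p7:
  fixes K :: "'a::banach set"
  assumes "compact K"
  shows
   "(\<forall>c1 \<alpha> \<beta>::real. c1 > 0 \<and> \<alpha> > 0 \<and>
       (\<forall>n::nat\<ge>2. entropy_number n K > c1 * (log 2 n) powr \<beta> / real n powr \<alpha>) \<longrightarrow>
       (\<forall>\<gamma>>0. \<exists>C>0. \<forall>n::nat\<ge>2.
           lip_width n \<gamma> K \<ge> C * (log 2 n) powr (\<beta> - \<alpha>) / real n powr \<alpha>))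
  \<and> (\<forall>c1 \<alpha>::real. c1 > 0 \<and> \<alpha> > 0 \<and>
       (\<forall>n::nat\<ge>2. entropy_number n K > c1 * (log 2 n) powr (- \<alpha>)) \<longrightarrow>
       (\<forall>\<gamma>>0. \<exists>C>0. \<forall>n::nat\<ge>2. lip_width n \<gamma> K \<ge> C * (log 2 n) powr (- \<alpha>)))
  \<and> (\<forall>c1 c \<alpha>::real. c1 > 0 \<and> c > 0 \<and> 0 < \<alpha> \<and> \<alpha> < 1 \<and>
       (\<forall>n::nat\<ge>1. entropy_number n K > c1 * 2 powr (- c * real n powr \<alpha>)) \<longrightarrow>
       (\<forall>\<gamma>\<ge>2 * rad K. \<exists>C>0. \<exists>c2>0. \<forall>n::nat\<ge>1.
           lip_width n \<gamma> K \<ge> C * 2 powr (- c2 * real n powr (\<alpha> / (1 - \<alpha>)))))"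
proof (intro conjI allI impI)
  have Kb: "bounded K" using assms by (rule compact_imp_bounded)
  {
    fix c1 \<alpha> \<beta> \<gamma> :: real
    assume h: "c1 > 0 \<and> \<alpha> > 0 \<and> (\<forall>n::nat\<ge>2. entropy_number n K > c1 * (log 2 n) powr \<beta> / real n powr \<alpha>)"
      and g: "\<gamma> > 0"
    have Kne: "K \<noteq> {}"
    proof
      assume "K = {}"
      then have "entropy_number 2 K = 0" by (simp add: entropy_empty)
      moreover have "c1 * (log 2 (real (2::nat))) powr \<beta> / real (2::nat) powr \<alpha> > 0" using h by simp
      ultimately show False using h[THEN conjunct2, THEN conjunct2, rule_format, of 2] by simp
    qed
    obtain C where C: "C > 0" "\<forall>n::nat\<ge>2. C * ((log 2 n) powr (\<beta> - \<alpha>) / real n powr \<alpha>) \<le> lip_width n \<gamma> K"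
      using part_poly[OF Kb Kne, of c1 \<alpha> \<gamma> \<beta>] h g by auto
    show "\<exists>C>0. \<forall>n::nat\<ge>2. lip_width n \<gamma> K \<ge> C * (log 2 n) powr (\<beta> - \<alpha>) / real n powr \<alpha>"
      using C by (auto simp: times_divide_eq_right)
  }
  {
    fix c1 \<alpha> \<gamma> :: real
    assume h: "c1 > 0 \<and> \<alpha> > 0 \<and> (\<forall>n::nat\<ge>2. entropy_number n K > c1 * (log 2 n) powr (- \<alpha>))"
      and g: "\<gamma> > 0"
    have Kne: "K \<noteq> {}"
    proof
      assume "K = {}"
      then have "entropy_number 2 K = 0" by (simp add: entropy_empty)
      moreover have "c1 * (log 2 (real (2::nat))) powr (- \<alpha>) > 0" using h by simp
      ultimately show False using h[THEN conjunct2, THEN conjunct2, rule_format, of 2] by simp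
    qed
    have h': "\<forall>m::nat\<ge>2. entropy_number m K > c1 * (log 2 m) powr (- \<alpha>) / real m powr 0"
      using h by auto
    obtain C where C: "C > 0" "\<forall>n::nat\<ge>2. C * ((log 2 n) powr (- \<alpha> - 0) / real n powr 0) \<le> lip_width n \<gamma> K"
      using part_poly[OF Kb Kne, of c1 0 \<gamma> "- \<alpha>"] h h' g by auto
    show "\<exists>C>0. \<forall>n::nat\<ge>2. lip_width n \<gamma> K \<ge> C * (log 2 n) powr (- \<alpha>)"
      using C by auto
  }
  {
    fix c1 c \<alpha> \<gamma> :: real
    assume h: "c1 > 0 \<and> c > 0 \<and> 0 < \<alpha> \<and> \<alpha> < 1 \<and>
       (\<forall>n::nat\<ge>1. entropy_number n K > c1 * 2 powr (- c * real n powr \<alpha>))"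
      and g: "\<gamma> \<ge> 2 * rad K"
    have Kne: "K \<noteq> {}"
    proof
      assume "K = {}"
      then have "entropy_number 1 K = 0" by (simp add: entropy_empty)
      moreover have "c1 * 2 powr (- c * real (1::nat) powr \<alpha>) > 0" using h by simp
      ultimately show False using h[THEN conjunct2, THEN conjunct2, THEN conjunct2, THEN conjunct2, rule_format, of 1] by simp
    qed
    have g0: "\<gamma> \<ge> 0" using rad_nonneg[OF Kb Kne] g by linarith
    define \<gamma>' where "\<gamma>' = max \<gamma> 1"
    have g': "\<gamma>' > 0" "\<gamma> \<le> \<gamma>'" by (auto simp: \<gamma>'_def)
    obtain C c2 where C: "C > 0" "c2 > 0"
      "\<forall>n::nat\<ge>1. C * 2 powr (- c2 * real n powr (\<alpha> / (1 - \<alpha>))) \<le> lip_width n \<gamma>' K"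
      using part_exp[OF Kb Kne, of c1 c \<alpha> \<gamma>'] h g' by auto
    show "\<exists>C>0. \<exists>c2>0. \<forall>n::nat\<ge>1. lip_width n \<gamma> K \<ge> C * 2 powr (- c2 * real n powr (\<alpha> / (1 - \<alpha>)))"
    proof -
      have "\<forall>n::nat\<ge>1. C * 2 powr (- c2 * real n powr (\<alpha> / (1 - \<alpha>))) \<le> lip_width n \<gamma> K"
      proof (intro allI impI)
        fix n :: nat assume n: "1 \<le> n"
        have "C * 2 powr (- c2 * real n powr (\<alpha> / (1 - \<alpha>))) \<le> lip_width n \<gamma>' K" using C(3) n by blast
        also have "\<dots> \<le> lip_width n \<gamma> K" by (rule lip_width_gamma_mono[OF Kb Kne g0 g'(2) n])
        finally show "C * 2 powr (- c2 * real n powr (\<alpha> / (1 - \<alpha>))) \<le> lip_width n \<gamma> K" .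
      qed
      then show ?thesis using C(1,2) by blast
    qed
  }
qed

end
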